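(* Let $f:\mathbb R^n\to\mathbb R$ be convex, differentiable and $L$-Lipschitz smooth, let $g:\mathbb R^n\to\mathbb R\cup\{+\infty\}$ be proper, closed and convex, and let $F=f+g$. Let $\epsilon\ge0$, $\rho>0$, $x\in\mathbb R^n$, and let $\tilde x\approx_\epsilon T_\rho(x)$. Then $$\|x-\tilde x\|\ge (L+\rho)^{-1}\operatorname{dist}\big(\mathbf 0\,\big|\,\partial_\epsilon F(\tilde x)\big).$$
   Context: $f$ is $L$-Lipschitz smooth means $D_f(x,y):=f(x)-f(y)-\langle\nabla f(y),x-y\rangle\le\frac L2\|x-y\|^2$ for all $x,y$ (equivalently, for convex differentiable $f$, $\nabla f$ is $L$-Lipschitz). For a proper $h$, $\epsilon\ge0$, $\partial_\epsilon h(\bar x)=\{v:\langle v,x-\bar x\rangle\le h(x)-h(\bar x)+\epsilon\ \forall x\}$ for $\bar x\in\operatorname{dom}h$, and $\emptyset$ otherwise. The inexact proximal gradient relation $\tilde x\approx_\epsilon T_\rho(x)$ means $\mathbf 0\in\nabla f(x)-\rho(x-\tilde x)+\partial_\epsilon g(\tilde x)$. $\operatorname{dist}(\mathbf 0|S)=\inf_{s\in S}\|s\|$, Euclidean norm. *)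

theory Defs
  imports "HOL-Analysis.Analysis"
begin

text \<open>Extended-valued functions are modelled as maps into ereal; the value \<infinity> plays the role of +\<infinity>.\<close>

definition ext_dom :: "('a \<Rightarrow> ereal) \<Rightarrow> 'a set" where
  "ext_dom h = {x. h x < \<infinity>}"

definition proper_fun :: "('a \<Rightarrow> ereal) \<Rightarrow> bool" where
  "proper_fun h \<longleftrightarrow> (\<forall>x. h x \<noteq> -\<infinity>) \<and> (\<exists>x. h x < \<infinity>)"

text \<open>Closed = lower semicontinuous = closed epigraph.\<close>
definition closed_fun :: "('a::topological_space \<Rightarrow> ereal) \<Rightarrow> bool" where
  "closed_fun h \<longleftrightarrow> closed {(x, t::real). h x \<le> ereal t}"

definition convex_efun :: "('a::real_vector \<Rightarrow> ereal) \<Rightarrow> bool" where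
  "convex_efun h \<longleftrightarrow> convex {(x, t::real). h x \<le> ereal t}"

definition eps_subdiff :: "('a::real_inner \<Rightarrow> ereal) \<Rightarrow> real \<Rightarrow> 'a \<Rightarrow> 'a set" where
  "eps_subdiff h \<epsilon> xb = (if xb \<in> ext_dom h then
      {v. \<forall>x. ereal (inner v (x - xb)) \<le> h x - h xb + ereal \<epsilon>} else {})"

text \<open>dist(0 | S) = inf of norms over S (with inf of the empty set = \<infinity>).\<close>
definition dist0 :: "'a::real_normed_vector set \<Rightarrow> ereal" where
  "dist0 S = (INF s\<in>S. ereal (norm s))"

end

theory Submission imports Defs begin
lemma grad_ineq:
  fixes f :: "'a::real_inner \<Rightarrow> real"
  assumes cv: "convex_on UNIV f"
    and d: "(f has_derivative (\<lambda>h. inner (D) h)) (at y)"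
  shows "f y + inner D (z - y) \<le> f z"
proof -
  define h where "h t = f (y + t *\<^sub>R (z - y))" for t :: real
  have hc: "convex_on UNIV h"
    unfolding h_def
  proof (rule convex_onI)
    fix t :: real and a b :: real
    assume "0 < t" "t < 1" "a \<in> UNIV" "b \<in> UNIV"
    have "y + ((1 - t) *\<^sub>R a + t *\<^sub>R b) *\<^sub>R (z - y) = (1 - t) *\<^sub>R (y + a *\<^sub>R (z - y)) + t *\<^sub>R (y + b *\<^sub>R (z - y))"
      by (simp add: algebra_simps)
    then show "f (y + ((1 - t) *\<^sub>R a + t *\<^sub>R b) *\<^sub>R (z - y)) \<le> (1 - t) * f (y + a *\<^sub>R (z - y)) + t * f (y + b *\<^sub>R (z - y))"
      using convex_onD[OF cv, of t] \<open>0 < t\<close> \<open>t < 1\<close> by auto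
  qed simp
  have "((\<lambda>t. y + t *\<^sub>R (z - y)) has_derivative (\<lambda>t. t *\<^sub>R (z - y))) (at 0)"
    by (auto intro!: derivative_eq_intros)
  from diff_chain_at[OF this, of f "\<lambda>h. inner D h"] d
  have "(h has_derivative (\<lambda>t. inner D (t *\<^sub>R (z - y)))) (at 0)"
    unfolding h_def by (simp add: o_def)
  then have "(h has_field_derivative inner D (z - y)) (at 0)"
    by (simp add: has_field_derivative_def mult.commute[of _ "inner D (z - y)"] )
  from convex_on_imp_above_tangent[OF hc, of 0 1, simplified, OF this]
  show ?thesis unfolding h_def by simp
qed

lemma one_side:
  fixes f :: "'a::real_inner \<Rightarrow> real"
  assumes cv: "convex_on UNIV f"
    and d: "\<And>y. (f has_derivative (\<lambda>h. inner (df y) h)) (at y)"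
    and sm: "\<And>u y. f u - f y - inner (df y) (u - y) \<le> L / 2 * (norm (u - y))\<^sup>2"
    and t: "t > 0"
  shows "f u - f y - inner (df y) (u - y) \<ge> (t - L/2 * t^2) * (norm (df u - df y))\<^sup>2"
proof -
  define g where "g = df u - df y"
  have a: "f y + inner (df y) ((u - t *\<^sub>R g) - y) \<le> f (u - t *\<^sub>R g)"
    by (rule grad_ineq[OF cv d])
  have b: "f (u - t *\<^sub>R g) - f u - inner (df u) ((u - t *\<^sub>R g) - u) \<le> L / 2 * (norm ((u - t *\<^sub>R g) - u))\<^sup>2"
    by (rule sm)
  have n: "(norm ((u - t *\<^sub>R g) - u))\<^sup>2 = t^2 * (norm g)\<^sup>2"
    using t by (simp add: power_mult_distrib)
  have i: "inner (df u) ((u - t *\<^sub>R g) - u) - inner (df y) ((u - t *\<^sub>R g) - y) = - t * (norm g)\<^sup>2 - inner (df y) (u - y)"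
    by (simp add: g_def inner_diff_right inner_diff_left algebra_simps power2_norm_eq_inner)
  show ?thesis using a b n i unfolding g_def[symmetric] by (simp add: algebra_simps)
qed

lemma grad_lip:
  fixes f :: "'a::real_inner \<Rightarrow> real"
  assumes cv: "convex_on UNIV f"
    and d: "\<And>y. (f has_derivative (\<lambda>h. inner (df y) h)) (at y)"
    and sm: "\<And>u y. f u - f y - inner (df y) (u - y) \<le> L / 2 * (norm (u - y))\<^sup>2"
    and L: "L \<ge> 0"
  shows "norm (df u - df y) \<le> L * norm (u - y)"
proof -
  define g where "g = df u - df y"
  have key: "(2 * t - L * t^2) * (norm g)\<^sup>2 \<le> norm g * norm (u - y)" if t: "t > 0" for t
  proof -
    have 1: "f u - f y - inner (df y) (u - y) \<ge> (t - L/2 * t^2) * (norm g)\<^sup>2"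
      using one_side[OF cv d sm t] g_def by simp
    have 2: "f y - f u - inner (df u) (y - u) \<ge> (t - L/2 * t^2) * (norm g)\<^sup>2"
      using one_side[OF cv d sm t, of y u] g_def by (simp add: norm_minus_commute)
    have 3: "inner g (u - y) \<le> norm g * norm (u - y)"
      by (rule norm_cauchy_schwarz)
    have 4: "inner g (u - y) = (f u - f y - inner (df y) (u - y)) + (f y - f u - inner (df u) (y - u))"
      by (simp add: g_def inner_diff_left inner_diff_right algebra_simps)
    show ?thesis using 1 2 3 4 by (simp add: algebra_simps)
  qed
  show ?thesis
  proof (cases "L = 0")
    case True
    show ?thesis
    proof (rule ccontr)
      assume "\<not> ?thesis"
      then have gp: "norm g > 0" using True g_def by simp
      define t where "t = norm (u - y) / norm g + 1"
      have tp: "t > 0" unfolding t_def using gp by (simp add: add_nonneg_pos)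
      have "2 * t * (norm g)\<^sup>2 \<le> norm g * norm (u - y)" using key[OF tp] True by simp
      then have "2 * t * norm g \<le> norm (u - y)" using gp by (simp add: power2_eq_square)
      moreover have "t * norm g = norm (u - y) + norm g" unfolding t_def using gp by (simp add: field_simps)
      ultimately show False using gp norm_ge_zero[of "u - y"] mult.assoc[of 2 t "norm g"] by linarith
    qed
  next
    case False
    then have Lp: "L > 0" using L by simp
    have "(2 * (1/L) - L * (1/L)^2) * (norm g)\<^sup>2 \<le> norm g * norm (u - y)" using key[of "1/L"] Lp by simp
    then have "(1/L) * (norm g)\<^sup>2 \<le> norm g * norm (u - y)" using Lp by (simp add: power2_eq_square field_simps)
    then have "(norm g)\<^sup>2 \<le> L * (norm g * norm (u - y))" using Lp by (simp add: field_simps)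
    then have "norm g * norm g \<le> norm g * (L * norm (u - y))" by (simp add: power2_eq_square algebra_simps)
    then show ?thesis unfolding g_def[symmetric]
      by (metis mult_le_cancel_left norm_ge_zero not_le mult_nonneg_nonneg Lp less_imp_le order_trans mult_le_0_iff zero_le_mult_iff)
  qed
qed

theorem lemma2p14:
  fixes f :: "real^'n \<Rightarrow> real" and df :: "real^'n \<Rightarrow> real^'n"
    and g :: "real^'n \<Rightarrow> ereal"
    and L \<epsilon> \<rho> :: real and x xt :: "real^'n"
  assumes f_convex: "convex_on UNIV f"
    and f_grad: "\<And>y. (f has_derivative (\<lambda>h. inner (df y) h)) (at y)"
    and f_smooth: "\<And>u y. f u - f y - inner (df y) (u - y) \<le> L / 2 * (norm (u - y))\<^sup>2"
    and g_proper: "proper_fun g" and g_closed: "closed_fun g" and g_convex: "convex_efun g"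
    and eps: "\<epsilon> \<ge> 0" and rho: "\<rho> > 0"
    and approx: "\<exists>v \<in> eps_subdiff g \<epsilon> xt. df x - \<rho> *\<^sub>R (x - xt) + v = 0"
  shows "ereal (norm (x - xt)) \<ge>
           ereal (inverse (L + \<rho>)) * dist0 (eps_subdiff (\<lambda>z. ereal (f z) + g z) \<epsilon> xt)"
proof -
  obtain i :: 'n where True by simp
  define e :: "real^'n" where "e = axis i 1"
  have ne: "norm e = 1" unfolding e_def by simp
  have "f x + inner (df x) ((x + e) - x) \<le> f (x + e)" by (rule grad_ineq[OF f_convex f_grad])
  moreover have "f (x + e) - f x - inner (df x) ((x + e) - x) \<le> L / 2 * (norm ((x + e) - x))\<^sup>2"
    by (rule f_smooth)
  ultimately have L0: "L \<ge> 0" using ne by simp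
  have Lr: "L + \<rho> > 0" using L0 rho by simp
  obtain v where v: "v \<in> eps_subdiff g \<epsilon> xt" and veq: "df x - \<rho> *\<^sub>R (x - xt) + v = 0"
    using approx by blast
  have xtd: "xt \<in> ext_dom g" using v unfolding eps_subdiff_def by (auto split: if_splits)
  have vp: "\<And>z. ereal (inner v (z - xt)) \<le> g z - g xt + ereal \<epsilon>"
    using v xtd unfolding eps_subdiff_def by auto
  obtain a where ga: "g xt = ereal a"
    using xtd g_proper unfolding ext_dom_def proper_fun_def
    by (cases "g xt") auto
  define w where "w = df xt + v"
  have wS: "w \<in> eps_subdiff (\<lambda>z. ereal (f z) + g z) \<epsilon> xt"
  proof -
    have "xt \<in> ext_dom (\<lambda>z. ereal (f z) + g z)" using ga unfolding ext_dom_def by simp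
    moreover have "ereal (inner w (z - xt)) \<le> (ereal (f z) + g z) - (ereal (f xt) + g xt) + ereal \<epsilon>" for z
    proof (cases "g z")
      case (real b)
      have 1: "inner v (z - xt) \<le> b - a + \<epsilon>" using vp[of z] real ga by simp
      have 2: "f xt + inner (df xt) (z - xt) \<le> f z" by (rule grad_ineq[OF f_convex f_grad])
      have 3: "inner w (z - xt) \<le> f z + b - (f xt + a) + \<epsilon>"
        using 1 2 unfolding w_def inner_add_left by linarith
      have 4: "(ereal (f z) + g z) - (ereal (f xt) + g xt) + ereal \<epsilon> = ereal (f z + b - (f xt + a) + \<epsilon>)"
        using real ga by simp
      show ?thesis unfolding 4 using 3 by simp
    next
      case PInf
      have "(ereal (f z) + g z) - (ereal (f xt) + g xt) + ereal \<epsilon> = \<infinity>"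
        using PInf ga by simp
      then show ?thesis by simp
    next
      case MInf
      then show ?thesis using g_proper unfolding proper_fun_def by simp
    qed
    ultimately show ?thesis unfolding eps_subdiff_def by simp
  qed
  have weq: "w = (df xt - df x) + \<rho> *\<^sub>R (x - xt)"
  proof -
    have "v = (df x - \<rho> *\<^sub>R (x - xt) + v) - (df x - \<rho> *\<^sub>R (x - xt))" by simp
    then have "v = \<rho> *\<^sub>R (x - xt) - df x" using veq by simp
    then show ?thesis unfolding w_def by simp
  qed
  have "norm w \<le> norm (df xt - df x) + \<rho> * norm (x - xt)"
    unfolding weq using rho norm_triangle_ineq[of "df xt - df x" "\<rho> *\<^sub>R (x - xt)"] by simp
  also have "\<dots> \<le> L * norm (xt - x) + \<rho> * norm (x - xt)"
    using grad_lip[OF f_convex f_grad f_smooth L0, of xt x] by simp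
  finally have nw: "norm w \<le> (L + \<rho>) * norm (x - xt)" by (simp add: norm_minus_commute algebra_simps)
  have d: "dist0 (eps_subdiff (\<lambda>z. ereal (f z) + g z) \<epsilon> xt) \<le> ereal (norm w)"
    unfolding dist0_def using wS by (rule INF_lower)
  have "ereal (inverse (L + \<rho>)) * dist0 (eps_subdiff (\<lambda>z. ereal (f z) + g z) \<epsilon> xt)
        \<le> ereal (inverse (L + \<rho>)) * ereal (norm w)"
    using d Lr by (intro ereal_mult_left_mono) auto
  also have "\<dots> = ereal (inverse (L + \<rho>) * norm w)" by simp
  also have "\<dots> \<le> ereal (norm (x - xt))"
    proof -
    have "inverse (L + \<rho>) * norm w \<le> inverse (L + \<rho>) * ((L + \<rho>) * norm (x - xt))"
      using nw Lr by (intro mult_left_mono) auto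
    also have "\<dots> = norm (x - xt)" using Lr by simp
    finally show ?thesis by simp
  qed
  finally show ?thesis .
qed

end
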